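(* For $r\ge 2$, the friendship graph $F_r=W(3,r)$ admits a weak IASI and its sparing number is $r$.
   Context: The friendship graph $F_r$ is obtained by joining $r$ copies of the cycle $C_3$ at a single common vertex; equivalently it is the windmill graph $W(3,r)$ ($r$ copies of $K_3$ sharing one vertex). Let $\mathbb{N}_0$ be the set of non-negative integers; for $A,B\subseteq\mathbb{N}_0$, $A+B=\{a+b:a\in A,b\in B\}$. An integer additive set-indexer (IASI) of a graph $G$ is an injective map $f:V(G)\to\mathcal{P}(\mathbb{N}_0)$ such that $f^+:E(G)\to\mathcal{P}(\mathbb{N}_0)$, $f^+(uv)=f(u)+f(v)$, is injective. A weak IASI is an IASI with $|f^+(uv)|=\max(|f(u)|,|f(v)|)$ for every edge $uv$. An edge $e$ is mono-indexed if $|f^+(e)|=1$. The sparing number $\varphi(G)$ is the minimum number of mono-indexed edges over all weak IASIs of $G$. *)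

theory Defs
  imports Main
begin

text \<open>Simple graphs: a vertex set V and a set E of edges, each edge a 2-element
set {u,v} with u, v in V.\<close>

definition sumset :: "nat set \<Rightarrow> nat set \<Rightarrow> nat set" where
  "sumset A B = {a + b | a b. a \<in> A \<and> b \<in> B}"

definition edge_set_index :: "('v \<Rightarrow> nat set) \<Rightarrow> 'v set \<Rightarrow> nat set" where
  "edge_set_index f e = {a + b | a b u v. e = {u, v} \<and> u \<noteq> v \<and> a \<in> f u \<and> b \<in> f v}"

text \<open>Integer additive set-indexer. Set-labels are nonempty finite subsets of N0
(the standard convention of the IASI literature, where cardinalities of labels are
natural numbers).\<close>
definition iasi :: "'v set \<Rightarrow> 'v set set \<Rightarrow> ('v \<Rightarrow> nat set) \<Rightarrow> bool" where
  "iasi V E f \<longleftrightarrow>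
     (\<forall>v\<in>V. finite (f v) \<and> f v \<noteq> {}) \<and>
     inj_on f V \<and>
     inj_on (edge_set_index f) E"

definition weak_iasi :: "'v set \<Rightarrow> 'v set set \<Rightarrow> ('v \<Rightarrow> nat set) \<Rightarrow> bool" where
  "weak_iasi V E f \<longleftrightarrow> iasi V E f \<and>
     (\<forall>u v. {u, v} \<in> E \<longrightarrow> u \<noteq> v \<longrightarrow>
        card (sumset (f u) (f v)) = max (card (f u)) (card (f v)))"

definition mono_indexed_edges :: "'v set set \<Rightarrow> ('v \<Rightarrow> nat set) \<Rightarrow> 'v set set" where
  "mono_indexed_edges E f = {e \<in> E. card (edge_set_index f e) = 1}"

definition sparing_number :: "'v set \<Rightarrow> 'v set set \<Rightarrow> nat" where
  "sparing_number V E = (LEAST k. \<exists>f. weak_iasi V E f \<and> card (mono_indexed_edges E f) = k)"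

text \<open>Friendship graph F_r = W(3,r): centre 0, vertices 1..2r, triangles {0, 2i-1, 2i}.\<close>
definition friendship_V :: "nat \<Rightarrow> nat set" where
  "friendship_V r = {0..2*r}"

definition friendship_E :: "nat \<Rightarrow> nat set set" where
  "friendship_E r = {{0, i} | i. 1 \<le> i \<and> i \<le> 2*r} \<union> {{2*i - 1, 2*i} | i. 1 \<le> i \<and> i \<le> r}"

end

theory Submission
  imports Defs
begin

lemma sumset_comm: "sumset A B = sumset B A"
  unfolding sumset_def by (auto, (metis add.commute)+)

lemma esi_pair: "u \<noteq> v \<Longrightarrow> edge_set_index f {u,v} = sumset (f u) (f v)"
  unfolding edge_set_index_def sumset_def
  apply (auto simp: doubleton_eq_iff)
  apply (metis add.commute)
  done

lemma sumset_single: "sumset {x} B = (\<lambda>b. x + b) ` B"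
  unfolding sumset_def by auto

lemma finite_sumset: "finite A \<Longrightarrow> finite B \<Longrightarrow> finite (sumset A B)"
proof -
  assume "finite A" "finite B"
  have "sumset A B \<subseteq> (\<lambda>(a,b). a+b) ` (A \<times> B)" unfolding sumset_def by auto
  thus ?thesis using \<open>finite A\<close> \<open>finite B\<close> by (rule finite_subset[OF _ finite_imageI[OF finite_SigmaI]])
qed

lemma card_sumset_ge:
  assumes A: "finite A" "A \<noteq> {}" and B: "finite B" "card B \<ge> 2"
  shows "card (sumset A B) \<ge> card A + 1"
proof -
  have Bne: "B \<noteq> {}" using B by auto
  have le: "Min B \<le> Max B" using B(1) Bne by (simp add: Min_le)
  have "Min B \<noteq> Max B"
  proof
    assume eq: "Min B = Max B"
    have "B \<subseteq> {Min B}"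
    proof
      fix b assume "b \<in> B"
      hence "Min B \<le> b" "b \<le> Max B" using B(1) by simp_all
      thus "b \<in> {Min B}" using eq by simp
    qed
    hence "card B \<le> card {Min B}" by (intro card_mono) simp_all
    thus False using B by simp
  qed
  hence lt: "Min B < Max B" using le by simp
  let ?S = "(\<lambda>a. a + Min B) ` A \<union> {Max A + Max B}"
  have mA: "Max A \<in> A" using A by simp
  have mB: "Max B \<in> B" "Min B \<in> B" using B(1) Bne by simp_all
  have sub: "?S \<subseteq> sumset A B" unfolding sumset_def using mA mB by blast
  have notin: "Max A + Max B \<notin> (\<lambda>a. a + Min B) ` A"
  proof
    assume "Max A + Max B \<in> (\<lambda>a. a + Min B) ` A"
    then obtain a where "a \<in> A" "Max A + Max B = a + Min B" by auto
    moreover have "a \<le> Max A" using A \<open>a \<in> A\<close> by simp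
    ultimately show False using lt by linarith
  qed
  have "card ?S = card A + 1"
    using notin A by (simp add: card_image inj_on_def)
  moreover have "card ?S \<le> card (sumset A B)"
    by (rule card_mono[OF finite_sumset[OF A(1) B(1)] sub])
  ultimately show ?thesis by simp
qed

lemma weak_single:
  assumes "weak_iasi V E f" "{u,v} \<in> E" "u \<noteq> v" "u \<in> V" "v \<in> V"
  shows "card (f u) = 1 \<or> card (f v) = 1"
proof (rule ccontr)
  assume n: "\<not> ?thesis"
  have fu: "finite (f u)" "f u \<noteq> {}" and fv: "finite (f v)" "f v \<noteq> {}"
    using assms unfolding weak_iasi_def iasi_def by auto
  have "card (f u) > 0" "card (f v) > 0" using fu fv by (simp_all add: card_gt_0_iff)
  hence "card (f u) \<ge> 2" "card (f v) \<ge> 2" using n by linarith+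
  have eq: "card (sumset (f u) (f v)) = max (card (f u)) (card (f v))"
    using assms unfolding weak_iasi_def by blast
  have "card (sumset (f u) (f v)) \<ge> card (f u) + 1"
    using card_sumset_ge[OF fu fv(1)] \<open>card (f v) \<ge> 2\<close> by simp
  moreover have "card (sumset (f v) (f u)) \<ge> card (f v) + 1"
    using card_sumset_ge[OF fv fu(1)] \<open>card (f u) \<ge> 2\<close> by simp
  ultimately show False using eq sumset_comm[of "f u" "f v"] by simp
qed

lemma finite_E: "finite (friendship_E r)"
proof -
  have "friendship_E r \<subseteq> (\<lambda>i. {0,i}) ` {1..2*r} \<union> (\<lambda>i. {2*i-1,2*i}) ` {1..r}"
  proof
    fix e assume "e \<in> friendship_E r"
    thus "e \<in> (\<lambda>i. {0,i}) ` {1..2*r} \<union> (\<lambda>i. {2*i-1,2*i}) ` {1..r}"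
      unfolding friendship_E_def
    proof (elim UnE CollectE exE conjE)
      fix i assume "e = {0,i}" "1 \<le> i" "i \<le> 2*r"
      thus ?thesis by (intro UnI1 image_eqI[of _ _ i]) simp_all
    next
      fix i assume "e = {2*i-1,2*i}" "1 \<le> i" "i \<le> r"
      thus ?thesis by (intro UnI2 image_eqI[of _ _ i]) simp_all
    qed
  qed
  thus ?thesis by (rule finite_subset) simp
qed

lemma lower:
  assumes w: "weak_iasi (friendship_V r) (friendship_E r) f"
  shows "r \<le> card (mono_indexed_edges (friendship_E r) f)"
proof -
  let ?M = "mono_indexed_edges (friendship_E r) f"
  let ?h = "\<lambda>e::nat set. (Max e + 1) div 2"
  have fin: "finite ?M" using finite_E unfolding mono_indexed_edges_def by simp
  have mono: "{u,v} \<in> ?M" if H: "{u,v} \<in> friendship_E r" "u \<noteq> v" "card (f u) = 1" "card (f v) = 1" for u v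
  proof -
    obtain x where "f u = {x}" using H(3) by (rule card_1_singletonE)
    moreover obtain y where "f v = {y}" using H(4) by (rule card_1_singletonE)
    ultimately show ?thesis using H esi_pair[of u v f] unfolding mono_indexed_edges_def
      by (simp add: sumset_single)
  qed
  have "{1..r} \<subseteq> ?h ` ?M"
  proof
    fix i assume i: "i \<in> {1..r}"
    define a where "a = 2*i - 1"
    define b where "b = 2*i"
    have V: "0 \<in> friendship_V r" "a \<in> friendship_V r" "b \<in> friendship_V r"
      using i unfolding friendship_V_def a_def b_def by auto
    have E1: "{0,a} \<in> friendship_E r"
      using i unfolding friendship_E_def a_def by (intro UnI1 CollectI exI[of _ "2*i-1"]) auto
    have E2: "{0,b} \<in> friendship_E r"
      using i unfolding friendship_E_def b_def by (intro UnI1 CollectI exI[of _ "2*i"]) auto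
    have E3: "{a,b} \<in> friendship_E r"
      using i unfolding friendship_E_def a_def b_def by (intro UnI2 CollectI exI[of _ "i"]) auto
    note E = E1 E2 E3
    have ne: "0 \<noteq> a" "0 \<noteq> b" "a \<noteq> b" using i unfolding a_def b_def by auto
    have c1: "card (f 0) = 1 \<or> card (f a) = 1" using weak_single[OF w E(1) ne(1) V(1) V(2)] .
    have c2: "card (f 0) = 1 \<or> card (f b) = 1" using weak_single[OF w E(2) ne(2) V(1) V(3)] .
    have c3: "card (f a) = 1 \<or> card (f b) = 1" using weak_single[OF w E(3) ne(3) V(2) V(3)] .
    have h1: "?h {0,a} = i" "?h {0,b} = i" "?h {a,b} = i"
      using i unfolding a_def b_def by auto
    show "i \<in> ?h ` ?M"
    proof -
      consider "card (f 0) = 1" "card (f a) = 1" | "card (f 0) = 1" "card (f b) = 1"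
        | "card (f a) = 1" "card (f b) = 1" using c1 c2 c3 by blast
      thus ?thesis
      proof cases
        case 1 show ?thesis by (rule rev_image_eqI[of "{0,a}" _ i ?h, OF mono[OF E(1) ne(1) 1] h1(1)[symmetric]])
      next
        case 2 show ?thesis by (rule rev_image_eqI[of "{0,b}" _ i ?h, OF mono[OF E(2) ne(2) 2] h1(2)[symmetric]])
      next
        case 3 show ?thesis by (rule rev_image_eqI[of "{a,b}" _ i ?h, OF mono[OF E(3) ne(3) 3] h1(3)[symmetric]])
      qed
    qed
  qed
  hence "card {1..r} \<le> card (?h ` ?M)" by (rule card_mono[OF finite_imageI[OF fin]])
  also have "\<dots> \<le> card ?M" using fin by (rule card_image_le)
  finally show ?thesis by simp
qed

definition F0 :: "nat \<Rightarrow> nat set" where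
  "F0 v = (if even v \<and> v \<noteq> 0 then {v, v+1} else {v})"

lemma card_F0: "card (F0 v) = (if even v \<and> v \<noteq> 0 then 2 else 1)"
  unfolding F0_def by auto

lemma Min_F0: "Min (F0 v) = v"
  unfolding F0_def by auto

lemma esi_F0_0: "j \<noteq> 0 \<Longrightarrow> edge_set_index F0 {0,j} = F0 j"
  by (simp add: esi_pair F0_def sumset_single)

lemma esi_F0_t: "i \<ge> 1 \<Longrightarrow> edge_set_index F0 {2*i-1,2*i} = {4*i-1, 4*i}"
proof -
  assume i: "i \<ge> 1"
  have "F0 (2*i-1) = {2*i-1}" using i unfolding F0_def by auto
  moreover have "F0 (2*i) = {2*i, 2*i+1}" using i unfolding F0_def by auto
  ultimately show ?thesis using i by (simp add: esi_pair sumset_single)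
qed

definition D :: "nat set \<Rightarrow> nat set" where
  "D S = (if card S = 2 \<and> odd (Min S) then {2*((Min S + 1) div 4) - 1, 2*((Min S + 1) div 4)}
          else {0, Min S})"

lemma D_inv: "e \<in> friendship_E r \<Longrightarrow> D (edge_set_index F0 e) = e"
  unfolding friendship_E_def
proof (elim UnE CollectE exE conjE)
  fix i assume e: "e = {0, i}" "1 \<le> i"
  thus "D (edge_set_index F0 e) = e"
    using esi_F0_0[of i] card_F0[of i] Min_F0[of i] unfolding D_def by auto
next
  fix i assume e: "e = {2*i-1, 2*i}" "1 \<le> i"
  have "Min {4*i-1, 4*i} = 4*i-1" using e by auto
  moreover have "card {4*i-1, 4*i} = 2" using e by auto
  moreover have "(4*i-1+1) div 4 = i" using e by auto
  moreover have "odd (4*i-1)" using e by presburger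
  ultimately show "D (edge_set_index F0 e) = e"
    using esi_F0_t[of i] e unfolding D_def by auto
qed

lemma F0_weak: "weak_iasi (friendship_V r) (friendship_E r) F0"
proof -
  have a: "\<forall>v\<in>friendship_V r. finite (F0 v) \<and> F0 v \<noteq> {}" unfolding F0_def by auto
  have b: "inj_on F0 (friendship_V r)" by (rule inj_on_inverseI[where g=Min]) (rule Min_F0)
  have c: "inj_on (edge_set_index F0) (friendship_E r)"
    by (rule inj_on_inverseI[where g=D]) (rule D_inv)
  have single: "card (sumset (F0 u) (F0 v)) = max (card (F0 u)) (card (F0 v))"
    if H: "card (F0 u) = 1" for u v
  proof -
    obtain x where "F0 u = {x}" using H by (rule card_1_singletonE)
    moreover have "card (F0 v) \<ge> 1" by (simp add: card_F0)
    ultimately show ?thesis by (simp add: sumset_single card_image)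
  qed
  have d: "card (sumset (F0 u) (F0 v)) = max (card (F0 u)) (card (F0 v))"
    if "{u,v} \<in> friendship_E r" "u \<noteq> v" for u v
  proof -
    have "card (F0 u) = 1 \<or> card (F0 v) = 1"
      using that(1) unfolding friendship_E_def
    proof (elim UnE CollectE exE conjE)
      fix i assume "{u,v} = {0,i}"
      hence "u = 0 \<or> v = 0" by (auto simp: doubleton_eq_iff)
      thus ?thesis by (auto simp: card_F0)
    next
      fix i assume "{u,v} = {2*i-1,2*i}" "1 \<le> i"
      hence "u = 2*i-1 \<or> v = 2*i-1" by (auto simp: doubleton_eq_iff)
      moreover have "odd (2*i-1)" using \<open>1 \<le> i\<close> by presburger
      ultimately show ?thesis by (auto simp: card_F0)
    qed
    thus ?thesis using single[of u v] single[of v u] sumset_comm[of "F0 u" "F0 v"]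
      by (auto simp: max.commute)
  qed
  show ?thesis unfolding weak_iasi_def iasi_def using a b c d by blast
qed

lemma F0_upper: "card (mono_indexed_edges (friendship_E r) F0) \<le> r"
proof -
  have "mono_indexed_edges (friendship_E r) F0 \<subseteq> (\<lambda>i. {0, 2*i-1}) ` {1..r}"
  proof
    fix e assume "e \<in> mono_indexed_edges (friendship_E r) F0"
    hence e: "e \<in> friendship_E r" "card (edge_set_index F0 e) = 1"
      unfolding mono_indexed_edges_def by auto
    show "e \<in> (\<lambda>i. {0, 2*i-1}) ` {1..r}"
      using e(1) unfolding friendship_E_def
    proof (elim UnE CollectE exE conjE)
      fix j assume j: "e = {0, j}" "1 \<le> j" "j \<le> 2*r"
      have "edge_set_index F0 e = F0 j" using j(1,2) esi_F0_0[of j] by simp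
      hence "card (F0 j) = 1" using e(2) by simp
      hence c1: "card (F0 j) = 1" .
      have "odd j"
      proof (rule ccontr)
        assume "\<not> odd j"
        hence "card (F0 j) = 2" using j(2) by (simp add: card_F0)
        thus False using c1 by simp
      qed
      then obtain i where ij: "j = 2*i+1" by (rule oddE)
      have "e = {0, 2*(i+1)-1}" using j(1) ij by simp
      moreover have "i+1 \<in> {1..r}" using j(3) ij by simp
      ultimately show ?thesis by (rule image_eqI[where f="\<lambda>i. {0, 2*i-1}"])
    next
      fix i assume ei: "e = {2*i-1, 2*i}" "1 \<le> i"
      have "card {4*i-1, 4*i} = 2" using ei(2) by simp
      thus ?thesis using e(2) esi_F0_t[OF ei(2)] ei(1) by simp
    qed
  qed
  hence "card (mono_indexed_edges (friendship_E r) F0) \<le> card ((\<lambda>i. {0, 2*i-1}) ` {1..r})"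
    by (rule card_mono[OF finite_imageI[OF finite_atLeastAtMost]])
  also have "\<dots> \<le> r" using card_image_le[of "{1..r}" "(\<lambda>i. {0, 2*i-1})"] by simp
  finally show ?thesis .
qed

theorem corollary2p16:
  fixes r :: nat
  assumes "r \<ge> 2"
  shows "(\<exists>f. weak_iasi (friendship_V r) (friendship_E r) f) \<and>
         sparing_number (friendship_V r) (friendship_E r) = r"
proof -
  have eq: "card (mono_indexed_edges (friendship_E r) F0) = r"
    using F0_upper[of r] lower[OF F0_weak[of r]] by simp
  have "sparing_number (friendship_V r) (friendship_E r) = r"
    unfolding sparing_number_def
  proof (rule Least_equality)
    show "\<exists>f. weak_iasi (friendship_V r) (friendship_E r) f \<and>
          card (mono_indexed_edges (friendship_E r) f) = r" using F0_weak eq by blast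
  next
    fix k assume "\<exists>f. weak_iasi (friendship_V r) (friendship_E r) f \<and>
          card (mono_indexed_edges (friendship_E r) f) = k"
    thus "r \<le> k" using lower by blast
  qed
  thus ?thesis using F0_weak by blast
qed

end
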